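(* There exists a constant $C_0=C_0(n,p)>0$ such that for every ball $B_r(x_0)\subset\mathbb{R}^n$ and all $\mathbf{v},\mathbf{w}\in W^{1,2}(B_r(x_0);\mathbb{R}^m)$ with $\mathbf{v}=\mathbf{w}$ on $\partial B_r(x_0)$, $$\int_{B_r(x_0)}\left(|\mathbf{v}|^p-|\mathbf{w}|^p\right)\le\frac p4\int_{B_r(x_0)}|\nabla(\mathbf{v}-\mathbf{w})|^2+C_0\,r^{n+\frac{2p}{2-p}}.$$
   Context: Fix integers $n\ge2$, $m\ge1$ and $0<p<1$. Boundary equality is in the trace sense. *)

theory Defs
  imports "HOL-Analysis.Analysis"
begin

text \<open>Points of R^n are real^'n (n = CARD('n)). Vector-valued maps into R^m are
  represented as functions real^'n => nat => real, of which only the components k < m matter,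
  so that m can be quantified inside the statement (the constant must not depend on m).\<close>

definition partial :: "'n::finite \<Rightarrow> (real^'n \<Rightarrow> real) \<Rightarrow> real^'n \<Rightarrow> real" where
  "partial j \<phi> x = frechet_derivative \<phi> (at x) (axis j 1)"

definition test_fun :: "(real^'n::finite) set \<Rightarrow> (real^'n \<Rightarrow> real) \<Rightarrow> bool" where
  "test_fun U \<phi> \<longleftrightarrow> (\<forall>x. \<phi> differentiable (at x)) \<and> (\<forall>j. continuous_on UNIV (partial j \<phi>))
     \<and> compact (closure {x. \<phi> x \<noteq> 0}) \<and> closure {x. \<phi> x \<noteq> 0} \<subseteq> U"

definition weak_deriv :: "(real^'n::finite) set \<Rightarrow> (real^'n \<Rightarrow> real) \<Rightarrow> 'n \<Rightarrow> (real^'n \<Rightarrow> real) \<Rightarrow> bool" where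
  "weak_deriv U f j g \<longleftrightarrow> (\<forall>\<phi>. test_fun U \<phi> \<longrightarrow>
     integral\<^sup>L (lebesgue_on U) (\<lambda>x. f x * partial j \<phi> x) = - integral\<^sup>L (lebesgue_on U) (\<lambda>x. g x * \<phi> x))"

definition L2 :: "(real^'n::finite) set \<Rightarrow> (real^'n \<Rightarrow> real) \<Rightarrow> bool" where
  "L2 U f \<longleftrightarrow> f \<in> borel_measurable (lebesgue_on U) \<and> integrable (lebesgue_on U) (\<lambda>x. (f x)\<^sup>2)"

definition W12 :: "(real^'n::finite) set \<Rightarrow> nat \<Rightarrow> (real^'n \<Rightarrow> nat \<Rightarrow> real) \<Rightarrow> (real^'n \<Rightarrow> nat \<Rightarrow> real^'n) \<Rightarrow> bool" where
  "W12 U m u G \<longleftrightarrow> (\<forall>k<m. L2 U (\<lambda>x. u x k) \<and>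
      (\<forall>j. L2 U (\<lambda>x. G x k $ j) \<and> weak_deriv U (\<lambda>x. u x k) j (\<lambda>x. G x k $ j)))"

text \<open>u \<in> W^{1,2}_0(U;R^m): W^{1,2}-limit of test functions (zero trace).\<close>
definition W012 :: "(real^'n::finite) set \<Rightarrow> nat \<Rightarrow> (real^'n \<Rightarrow> nat \<Rightarrow> real) \<Rightarrow> (real^'n \<Rightarrow> nat \<Rightarrow> real^'n) \<Rightarrow> bool" where
  "W012 U m u G \<longleftrightarrow> W12 U m u G \<and>
     (\<exists>\<phi> :: nat \<Rightarrow> real^'n \<Rightarrow> nat \<Rightarrow> real.
        (\<forall>i k. k < m \<longrightarrow> test_fun U (\<lambda>x. \<phi> i x k)) \<and>
        (\<lambda>i. integral\<^sup>L (lebesgue_on U) (\<lambda>x. \<Sum>k<m. (\<phi> i x k - u x k)\<^sup>2)) \<longlonglongrightarrow> 0 \<and>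
        (\<lambda>i. integral\<^sup>L (lebesgue_on U)
              (\<lambda>x. \<Sum>k<m. \<Sum>j\<in>UNIV. (partial j (\<lambda>y. \<phi> i y k) x - G x k $ j)\<^sup>2)) \<longlonglongrightarrow> 0)"

definition vnorm :: "nat \<Rightarrow> (nat \<Rightarrow> real) \<Rightarrow> real" where
  "vnorm m a = sqrt (\<Sum>k<m. (a k)\<^sup>2)"

definition gnorm2 :: "nat \<Rightarrow> (nat \<Rightarrow> real^'n::finite) \<Rightarrow> real" where
  "gnorm2 m A = (\<Sum>k<m. (norm (A k))\<^sup>2)"

end

theory Submission
  imports Defs
begin


lemma quad_disc:
  fixes A B D :: real
  assumes "\<And>s. 0 \<le> s^2 * A + 2 * s * B + D" "A \<ge> 0"
  shows "B^2 \<le> A * D"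
proof (cases "A = 0")
  case True
  show ?thesis
  proof (rule ccontr)
    assume "\<not> ?thesis"
    then have "B \<noteq> 0" using True by auto
    have "0 \<le> 2 * (-(D+1)/(2*B)) * B + D" using assms(1)[of "-(D+1)/(2*B)"] True by simp
    also have "\<dots> = -1" using \<open>B \<noteq> 0\<close> by (simp add: field_simps)
    finally show False by simp
  qed
next
  case False
  then have "A > 0" using assms(2) by simp
  have "0 \<le> (-B/A)^2 * A + 2 * (-B/A) * B + D" using assms(1) .
  also have "\<dots> = D - B^2/A" using \<open>A > 0\<close> by (simp add: field_simps power2_eq_square)
  finally show ?thesis using \<open>A > 0\<close> by (simp add: field_simps)
qed


lemma prod_integrable:
  fixes f g :: "'a \<Rightarrow> real"
  assumes "f \<in> borel_measurable M" "g \<in> borel_measurable M"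
    "integrable M (\<lambda>x. (f x)^2)" "integrable M (\<lambda>x. (g x)^2)"
  shows "integrable M (\<lambda>x. f x * g x)"
proof (rule Bochner_Integration.integrable_bound[where f="\<lambda>x. (f x)^2 + (g x)^2"])
  show "integrable M (\<lambda>x. (f x)^2 + (g x)^2)" using assms by auto
  show "(\<lambda>x. f x * g x) \<in> borel_measurable M" using assms by auto
  show "AE x in M. norm (f x * g x) \<le> norm ((f x)^2 + (g x)^2)"
  proof (rule AE_I2)
    fix x
    have "0 \<le> (\<bar>f x\<bar> - \<bar>g x\<bar>)^2" by simp
    then have "2 * (\<bar>f x\<bar> * \<bar>g x\<bar>) \<le> (f x)^2 + (g x)^2"
      by (simp add: power2_eq_square algebra_simps)
    moreover have "norm ((f x)^2 + (g x)^2) = (f x)^2 + (g x)^2" by simp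
    moreover have "0 \<le> \<bar>f x\<bar> * \<bar>g x\<bar>" by simp
    ultimately show "norm (f x * g x) \<le> norm ((f x)^2 + (g x)^2)"
      by (simp only: real_norm_def abs_mult)
  qed
qed


lemma CS_integral:
  fixes f g :: "'a \<Rightarrow> real"
  assumes "f \<in> borel_measurable M" "g \<in> borel_measurable M"
    "integrable M (\<lambda>x. (f x)^2)" "integrable M (\<lambda>x. (g x)^2)"
  shows "\<bar>integral\<^sup>L M (\<lambda>x. f x * g x)\<bar> \<le> sqrt (integral\<^sup>L M (\<lambda>x. (f x)^2)) * sqrt (integral\<^sup>L M (\<lambda>x. (g x)^2))"
proof -
  define A where "A = integral\<^sup>L M (\<lambda>x. (f x)^2)"
  define B where "B = integral\<^sup>L M (\<lambda>x. f x * g x)"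
  define D where "D = integral\<^sup>L M (\<lambda>x. (g x)^2)"
  have fg: "integrable M (\<lambda>x. f x * g x)" using prod_integrable[OF assms] .
  have "B^2 \<le> A * D"
  proof (rule quad_disc)
    fix s :: real
    have "0 \<le> integral\<^sup>L M (\<lambda>x. (s * f x + g x)^2)" by simp
    also have "integral\<^sup>L M (\<lambda>x. (s * f x + g x)^2) = integral\<^sup>L M (\<lambda>x. s^2 * (f x)^2 + 2 * s * (f x * g x) + (g x)^2)"
      by (rule Bochner_Integration.integral_cong) (auto simp: power2_eq_square algebra_simps)
    also have "\<dots> = integral\<^sup>L M (\<lambda>x. s^2 * (f x)^2 + 2 * s * (f x * g x)) + integral\<^sup>L M (\<lambda>x. (g x)^2)"
      by (rule Bochner_Integration.integral_add) (use assms fg in auto)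
    also have "integral\<^sup>L M (\<lambda>x. s^2 * (f x)^2 + 2 * s * (f x * g x)) = integral\<^sup>L M (\<lambda>x. s^2 * (f x)^2) + integral\<^sup>L M (\<lambda>x. 2 * s * (f x * g x))"
      by (rule Bochner_Integration.integral_add) (use assms fg in auto)
    also have "\<dots> = s^2 * A + 2 * s * B" unfolding A_def B_def by simp
    finally show "0 \<le> s^2 * A + 2 * s * B + D" unfolding D_def .
  next
    show "A \<ge> 0" unfolding A_def by simp
  qed
  then have "sqrt (B^2) \<le> sqrt (A * D)" by (rule real_sqrt_le_mono)
  then show ?thesis unfolding A_def B_def D_def by (simp add: real_sqrt_mult)
qed



lemma L2_prod: "L2 U f \<Longrightarrow> L2 U g \<Longrightarrow> integrable (lebesgue_on U) (\<lambda>x. f x * g x)"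
  unfolding L2_def by (intro prod_integrable) auto

lemma L2_CS: "L2 U f \<Longrightarrow> L2 U g \<Longrightarrow> \<bar>integral\<^sup>L (lebesgue_on U) (\<lambda>x. f x * g x)\<bar> \<le>
   sqrt (integral\<^sup>L (lebesgue_on U) (\<lambda>x. (f x)^2)) * sqrt (integral\<^sup>L (lebesgue_on U) (\<lambda>x. (g x)^2))"
  unfolding L2_def by (intro CS_integral) auto

lemma L2_add: assumes "L2 U f" "L2 U g" shows "L2 U (\<lambda>x. f x + g x)"
proof -
  have "integrable (lebesgue_on U) (\<lambda>x. (f x)^2 + (g x)^2 + 2 * (f x * g x))"
    using assms L2_prod[OF assms] unfolding L2_def by auto
  then have "integrable (lebesgue_on U) (\<lambda>x. (f x + g x)^2)"
    by (rule back_subst[where P="integrable _"]) (auto simp: power2_eq_square algebra_simps)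
  then show ?thesis using assms unfolding L2_def by auto
qed

lemma L2_cmult: assumes "L2 U f" shows "L2 U (\<lambda>x. c * f x)"
  using assms unfolding L2_def by (auto simp: power_mult_distrib)

lemma L2_minus: assumes "L2 U f" "L2 U g" shows "L2 U (\<lambda>x. f x - g x)"
  using L2_add[OF assms(1) L2_cmult[OF assms(2), of "-1"]] by simp

lemma L2_bmult: assumes "L2 U f" "b \<in> borel_measurable (lebesgue_on U)" "\<And>x. x \<in> U \<Longrightarrow> \<bar>b x\<bar> \<le> B"
  shows "L2 U (\<lambda>x. f x * b x)"
proof -
  have "integrable (lebesgue_on U) (\<lambda>x. B^2 * (f x)^2)" using assms unfolding L2_def by auto
  then have "integrable (lebesgue_on U) (\<lambda>x. (f x * b x)^2)"
  proof (rule Bochner_Integration.integrable_bound)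
    show "(\<lambda>x. (f x * b x)\<^sup>2) \<in> borel_measurable (lebesgue_on U)" using assms unfolding L2_def by auto
    show "AE x in lebesgue_on U. norm ((f x * b x)\<^sup>2) \<le> norm (B\<^sup>2 * (f x)\<^sup>2)"
    proof (rule AE_I2)
      fix x assume "x \<in> space (lebesgue_on U)"
      then have "\<bar>b x\<bar> \<le> B" using assms(3) by simp
      then have "(b x)^2 \<le> B^2" by (metis abs_ge_zero power2_abs power_mono)
      then show "norm ((f x * b x)\<^sup>2) \<le> norm (B\<^sup>2 * (f x)\<^sup>2)"
        by (simp add: power_mult_distrib mult_right_mono mult.commute)
    qed
  qed
  then show ?thesis using assms unfolding L2_def by auto
qed

lemma finite_ball: "finite_measure (lebesgue_on (ball (x0::'a::euclidean_space) r))"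
  by (rule finite_measure_lebesgue_on) simp

lemma cont_bounded_ball:
  fixes f :: "'a::euclidean_space \<Rightarrow> real"
  assumes "continuous_on UNIV f"
  shows "\<exists>B. \<forall>x\<in>ball x0 r. \<bar>f x\<bar> \<le> B"
proof -
  have "compact (f ` cball x0 r)" using assms by (intro compact_continuous_image) (auto intro: continuous_on_subset)
  then obtain B where "\<forall>y\<in>f ` cball x0 r. norm y \<le> B" using compact_imp_bounded bounded_iff by metis
  note BB = this
  show ?thesis
  proof (intro exI ballI)
    fix x assume "x \<in> ball x0 r"
    then have "x \<in> cball x0 r" by simp
    then show "\<bar>f x\<bar> \<le> B" using BB by auto
  qed
qed

lemma cont_meas: "continuous_on UNIV (f::'a::euclidean_space \<Rightarrow> real) \<Longrightarrow> f \<in> borel_measurable (lebesgue_on (ball x0 r))"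
  by (rule continuous_imp_measurable_on_sets_lebesgue) (auto intro: continuous_on_subset)

lemma cont_L2:
  fixes f :: "real^'n::finite \<Rightarrow> real"
  assumes "continuous_on UNIV f"
  shows "L2 (ball x0 r) f"
proof -
  interpret finite_measure "lebesgue_on (ball x0 r)" by (rule finite_ball)
  obtain B where B: "\<forall>x\<in>ball x0 r. \<bar>f x\<bar> \<le> B" using cont_bounded_ball[OF assms] by blast
  have "L2 (ball x0 r) (\<lambda>x. 1 * f x)"
  proof (rule L2_bmult)
    show "L2 (ball x0 r) (\<lambda>x. 1)" unfolding L2_def by auto
  qed (use B cont_meas[OF assms] in auto)
  then show ?thesis by simp
qed


lemma partial_mult_coord:
  fixes \<phi> :: "real^'n::finite \<Rightarrow> real"
  assumes "\<phi> differentiable (at x)"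
  shows "partial i (\<lambda>y. \<phi> y * (y$j - c)) x = \<phi> x * (if i = j then 1 else 0) + partial i \<phi> x * (x$j - c)"
proof -
  have d1: "(\<phi> has_derivative frechet_derivative \<phi> (at x)) (at x)"
    using assms frechet_derivative_works by blast
  have d2: "((\<lambda>y. y$j - c) has_derivative (\<lambda>h. h$j)) (at x)"
    using has_derivative_diff[OF bounded_linear.has_derivative[OF bounded_linear_vec_nth[of j] has_derivative_ident[of "at x"]] has_derivative_const[of c]]
    by (simp only: diff_zero)
  have "((\<lambda>y. \<phi> y * (y$j - c)) has_derivative (\<lambda>h. \<phi> x * h$j + frechet_derivative \<phi> (at x) h * (x$j - c))) (at x)"
    by (rule has_derivative_mult[OF d1 d2])
  then have "frechet_derivative (\<lambda>y. \<phi> y * (y$j - c)) (at x) = (\<lambda>h. \<phi> x * h$j + frechet_derivative \<phi> (at x) h * (x$j - c))"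
    by (rule frechet_derivative_at[symmetric])
  moreover have "axis i (1::real) $ j = (if i = j then 1 else 0)" unfolding axis_def by auto
  ultimately show ?thesis unfolding partial_def by simp
qed

lemma test_fun_mult_coord:
  fixes \<phi> :: "real^'n::finite \<Rightarrow> real"
  assumes "test_fun U \<phi>"
  shows "test_fun U (\<lambda>y. \<phi> y * (y$j - c))"
proof -
  have dif: "\<And>x. \<phi> differentiable (at x)" and pc: "\<And>i. continuous_on UNIV (partial i \<phi>)"
    and cp: "compact (closure {x. \<phi> x \<noteq> 0})" and sub: "closure {x. \<phi> x \<noteq> 0} \<subseteq> U"
    using assms unfolding test_fun_def by auto
  have d2: "\<And>x. (\<lambda>y::real^'n. y$j - c) differentiable (at x)"
    using has_derivative_diff[OF bounded_linear.has_derivative[OF bounded_linear_vec_nth[of j] has_derivative_ident] has_derivative_const[of c]]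
    unfolding differentiable_def by blast
  have "\<And>x. (\<lambda>y. \<phi> y * (y$j - c)) differentiable (at x)"
    using dif d2 by (rule differentiable_mult)
  moreover have "continuous_on UNIV (partial i (\<lambda>y. \<phi> y * (y$j - c)))" for i
  proof -
    have "partial i (\<lambda>y. \<phi> y * (y$j - c)) = (\<lambda>x. \<phi> x * (if i = j then 1 else 0) + partial i \<phi> x * (x$j - c))"
      using partial_mult_coord[OF dif] by auto
    moreover have "continuous_on UNIV \<phi>"
      using dif by (simp add: differentiable_imp_continuous_within continuous_at_imp_continuous_on)
    moreover have "continuous_on UNIV (\<lambda>x::real^'n. x$j - c)"
      by (intro continuous_on_diff continuous_on_const linear_continuous_on bounded_linear_vec_nth)
    ultimately show ?thesis using pc[of i]
      by (simp only:) (intro continuous_on_add continuous_on_mult continuous_on_const)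
  qed
  moreover have cs: "closure {x. \<phi> x * (x$j - c) \<noteq> 0} \<subseteq> closure {x. \<phi> x \<noteq> 0}"
    by (rule closure_mono) auto
  moreover have "compact (closure {x. \<phi> x * (x$j - c) \<noteq> 0})"
    using cs cp compact_Int_closed[of "closure {x. \<phi> x \<noteq> 0}" "closure {x. \<phi> x * (x$j - c) \<noteq> 0}"]
    by (simp add: Int_absorb1)
  ultimately show ?thesis using sub unfolding test_fun_def by auto
qed


lemma int_diff_mult:
  assumes "L2 U f" "L2 U a" "L2 U b"
  shows "integral\<^sup>L (lebesgue_on U) (\<lambda>x. f x * (a x - b x)) = integral\<^sup>L (lebesgue_on U) (\<lambda>x. f x * a x) - integral\<^sup>L (lebesgue_on U) (\<lambda>x. f x * b x)"
proof -
  have "(\<lambda>x. f x * (a x - b x)) = (\<lambda>x. f x * a x - f x * b x)" by (simp add: right_diff_distrib)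
  then show ?thesis using Bochner_Integration.integral_diff[OF L2_prod[OF assms(1,2)] L2_prod[OF assms(1,3)]] by simp
qed

lemma poincare_comp:
  fixes u g :: "real^'n::finite \<Rightarrow> real" and \<phi> :: "nat \<Rightarrow> real^'n \<Rightarrow> real"
  assumes r: "r > 0" and Lu: "L2 (ball x0 r) u" and Lg: "L2 (ball x0 r) g"
    and wd: "weak_deriv (ball x0 r) u j g"
    and tf: "\<And>i. test_fun (ball x0 r) (\<phi> i)"
    and c1: "(\<lambda>i. integral\<^sup>L (lebesgue_on (ball x0 r)) (\<lambda>x. (\<phi> i x - u x)^2)) \<longlonglongrightarrow> 0"
    and c2: "(\<lambda>i. integral\<^sup>L (lebesgue_on (ball x0 r)) (\<lambda>x. (partial j (\<phi> i) x - g x)^2)) \<longlonglongrightarrow> 0"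
  shows "integral\<^sup>L (lebesgue_on (ball x0 r)) (\<lambda>x. (u x)^2) \<le> 4 * r^2 * integral\<^sup>L (lebesgue_on (ball x0 r)) (\<lambda>x. (g x)^2)"
proof -
  define U where "U = ball x0 r"
  define h where "h = (\<lambda>x::real^'n. x$j - x0$j)"
  have hc: "continuous_on UNIV h" unfolding h_def
    by (intro continuous_on_diff continuous_on_const linear_continuous_on bounded_linear_vec_nth)
  have hb: "\<bar>h x\<bar> \<le> r" if "x \<in> U" for x
  proof -
    have "\<bar>(x - x0)$j\<bar> \<le> norm (x - x0)" by (rule component_le_norm_cart)
    also have "\<dots> < r" using that unfolding U_def by (simp add: dist_norm norm_minus_commute)
    finally show ?thesis unfolding h_def by simp
  qed
  have hm: "h \<in> borel_measurable (lebesgue_on U)" unfolding U_def using hc by (rule cont_meas)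
  have Lu': "L2 U u" and Lg': "L2 U g" using Lu Lg unfolding U_def by auto
  have Luh: "L2 U (\<lambda>x. u x * h x)" by (rule L2_bmult[OF Lu' hm hb])
  have Lgh: "L2 U (\<lambda>x. g x * h x)" by (rule L2_bmult[OF Lg' hm hb])
  have dif: "\<And>i x. \<phi> i differentiable (at x)" using tf unfolding test_fun_def by blast
  have phic: "continuous_on UNIV (\<phi> i)" for i
    using dif by (simp add: differentiable_imp_continuous_within continuous_at_imp_continuous_on)
  have Lphi: "L2 U (\<phi> i)" for i unfolding U_def by (rule cont_L2[OF phic])
  have Ldphi: "L2 U (partial j (\<phi> i))" for i unfolding U_def
    using tf[of i] unfolding test_fun_def by (intro cont_L2) blast
  define A where "A = integral\<^sup>L (lebesgue_on U) (\<lambda>x. u x * u x)"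
  define Bv where "Bv = integral\<^sup>L (lebesgue_on U) (\<lambda>x. (u x * h x) * g x)"
  define e1 where "e1 = (\<lambda>i. integral\<^sup>L (lebesgue_on U) (\<lambda>x. (\<phi> i x - u x)^2))"
  define e2 where "e2 = (\<lambda>i. integral\<^sup>L (lebesgue_on U) (\<lambda>x. (partial j (\<phi> i) x - g x)^2))"
  define cu where "cu = sqrt (integral\<^sup>L (lebesgue_on U) (\<lambda>x. (u x)^2))"
  define cuh where "cuh = sqrt (integral\<^sup>L (lebesgue_on U) (\<lambda>x. (u x * h x)^2))"
  define cgh where "cgh = sqrt (integral\<^sup>L (lebesgue_on U) (\<lambda>x. (g x * h x)^2))"
  have key: "\<bar>A + 2 * Bv\<bar> \<le> cu * sqrt (e1 i) + cuh * sqrt (e2 i) + cgh * sqrt (e1 i)" for i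
  proof -
    define I1 where "I1 = integral\<^sup>L (lebesgue_on U) (\<lambda>x. u x * \<phi> i x)"
    define I2 where "I2 = integral\<^sup>L (lebesgue_on U) (\<lambda>x. (u x * h x) * partial j (\<phi> i) x)"
    define I3 where "I3 = integral\<^sup>L (lebesgue_on U) (\<lambda>x. (g x * h x) * \<phi> i x)"
    have tfi: "test_fun U (\<lambda>y. \<phi> i y * (y$j - x0$j))"
      using test_fun_mult_coord[OF tf[of i]] unfolding U_def .
    have "integral\<^sup>L (lebesgue_on U) (\<lambda>x. u x * partial j (\<lambda>y. \<phi> i y * (y$j - x0$j)) x)
        = - integral\<^sup>L (lebesgue_on U) (\<lambda>x. g x * (\<phi> i x * (x$j - x0$j)))"
      using wd tfi unfolding weak_deriv_def U_def by blast
    moreover have "(\<lambda>x. u x * partial j (\<lambda>y. \<phi> i y * (y$j - x0$j)) x) = (\<lambda>x. u x * \<phi> i x + (u x * h x) * partial j (\<phi> i) x)"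
    proof -
      have pm: "\<And>x. partial j (\<lambda>y. \<phi> i y * (y$j - x0$j)) x = \<phi> i x + partial j (\<phi> i) x * h x"
        using partial_mult_coord[OF dif] unfolding h_def by simp
      show ?thesis unfolding pm by (simp add: algebra_simps)
    qed
    moreover have "(\<lambda>x. g x * (\<phi> i x * (x$j - x0$j))) = (\<lambda>x. (g x * h x) * \<phi> i x)"
      unfolding h_def by (auto simp: algebra_simps)
    moreover have "integral\<^sup>L (lebesgue_on U) (\<lambda>x. u x * \<phi> i x + (u x * h x) * partial j (\<phi> i) x) = I1 + I2"
      unfolding I1_def I2_def
      by (rule Bochner_Integration.integral_add) (intro L2_prod Lu' Lphi Luh Ldphi)+
    ultimately have sum0: "I1 + I2 + I3 = 0" unfolding I3_def by simp
    have d1: "I1 - A = integral\<^sup>L (lebesgue_on U) (\<lambda>x. u x * (\<phi> i x - u x))"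
      unfolding I1_def A_def
      using int_diff_mult[OF Lu' Lphi Lu'] by simp
    have d2: "I2 - Bv = integral\<^sup>L (lebesgue_on U) (\<lambda>x. (u x * h x) * (partial j (\<phi> i) x - g x))"
      unfolding I2_def Bv_def
      using int_diff_mult[OF Luh Ldphi Lg'] by simp
    have eB: "Bv = integral\<^sup>L (lebesgue_on U) (\<lambda>x. (g x * h x) * u x)"
      unfolding Bv_def by (rule Bochner_Integration.integral_cong) (auto simp: algebra_simps)
    have d3: "I3 - Bv = integral\<^sup>L (lebesgue_on U) (\<lambda>x. (g x * h x) * (\<phi> i x - u x))"
      unfolding I3_def eB
      using int_diff_mult[OF Lgh Lphi Lu'] by simp
    have b1: "\<bar>I1 - A\<bar> \<le> cu * sqrt (e1 i)" unfolding d1 cu_def e1_def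
      by (rule L2_CS[OF Lu' L2_minus[OF Lphi Lu']])
    have b2: "\<bar>I2 - Bv\<bar> \<le> cuh * sqrt (e2 i)" unfolding d2 cuh_def e2_def
      by (rule L2_CS[OF Luh L2_minus[OF Ldphi Lg']])
    have b3: "\<bar>I3 - Bv\<bar> \<le> cgh * sqrt (e1 i)" unfolding d3 cgh_def e1_def
      by (rule L2_CS[OF Lgh L2_minus[OF Lphi Lu']])
    have "A + 2 * Bv = - ((I1 - A) + (I2 - Bv) + (I3 - Bv))" using sum0 by simp
    then show ?thesis using b1 b2 b3 by linarith
  qed
  have lim: "(\<lambda>i. cu * sqrt (e1 i) + cuh * sqrt (e2 i) + cgh * sqrt (e1 i)) \<longlonglongrightarrow> cu * sqrt 0 + cuh * sqrt 0 + cgh * sqrt 0"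
    using c1 c2 unfolding e1_def e2_def U_def
    by (intro tendsto_add tendsto_mult tendsto_const tendsto_real_sqrt)
  have "\<bar>A + 2 * Bv\<bar> \<le> cu * sqrt 0 + cuh * sqrt 0 + cgh * sqrt 0"
    by (rule LIMSEQ_le_const[OF lim]) (use key in blast)
  then have AB: "A = - 2 * Bv" by simp
  have "-2 * Bv = integral\<^sup>L (lebesgue_on U) (\<lambda>x. -2 * ((u x * h x) * g x))"
    unfolding Bv_def by simp
  also have "\<dots> \<le> integral\<^sup>L (lebesgue_on U) (\<lambda>x. (u x)^2 / 2 + 2 * r^2 * (g x)^2)"
  proof (rule integral_mono)
    show "integrable (lebesgue_on U) (\<lambda>x. -2 * ((u x * h x) * g x))"
      using L2_prod[OF Luh Lg'] by simp
    show "integrable (lebesgue_on U) (\<lambda>x. (u x)^2 / 2 + 2 * r^2 * (g x)^2)"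
      using Lu' Lg' unfolding L2_def by auto
    fix x assume "x \<in> space (lebesgue_on U)"
    then have hx: "\<bar>h x\<bar> \<le> r" using hb by simp
    have "-2 * ((u x * h x) * g x) \<le> 2 * (\<bar>u x\<bar> * \<bar>g x\<bar>) * \<bar>h x\<bar>"
      by (simp add: abs_mult) (metis abs_ge_self abs_minus abs_mult mult.commute mult.left_commute)
    also have "\<dots> \<le> 2 * (\<bar>u x\<bar> * \<bar>g x\<bar>) * r"
      using hx by (intro mult_left_mono) auto
    also have "\<dots> \<le> (u x)^2 / 2 + 2 * r^2 * (g x)^2"
    proof -
      have "0 \<le> (\<bar>u x\<bar> - 2 * r * \<bar>g x\<bar>)^2" by simp
      then show ?thesis by (simp add: power2_eq_square algebra_simps)
    qed
    finally show "-2 * ((u x * h x) * g x) \<le> (u x)^2 / 2 + 2 * r^2 * (g x)^2" .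
  qed
  also have "\<dots> = integral\<^sup>L (lebesgue_on U) (\<lambda>x. (u x)^2) / 2 + 2 * r^2 * integral\<^sup>L (lebesgue_on U) (\<lambda>x. (g x)^2)"
    using Lu' Lg' unfolding L2_def by simp
  finally have "A \<le> integral\<^sup>L (lebesgue_on U) (\<lambda>x. (u x)^2) / 2 + 2 * r^2 * integral\<^sup>L (lebesgue_on U) (\<lambda>x. (g x)^2)"
    using AB by simp
  moreover have "A = integral\<^sup>L (lebesgue_on U) (\<lambda>x. (u x)^2)" unfolding A_def by (simp add: power2_eq_square)
  ultimately show ?thesis unfolding U_def by simp
qed


lemma powr_subadd:
  fixes s t p :: real
  assumes "0 \<le> s" "0 \<le> t" "0 < p" "p \<le> 1"
  shows "(s + t) powr p \<le> s powr p + t powr p"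
proof (cases "s + t = 0")
  case True then show ?thesis by simp
next
  case False
  then have st: "s + t > 0" using assms by linarith
  have aux: "a * (s + t) powr (p - 1) \<le> a powr p" if "0 \<le> a" "a \<le> s + t" for a
  proof (cases "a = 0")
    case True then show ?thesis by simp
  next
    case False
    then have a0: "a > 0" using that by simp
    have "(s + t) powr (p - 1) \<le> a powr (p - 1)" using powr_mono2'[of "p - 1" a "s + t"] a0 that assms by simp
    then have "a * (s + t) powr (p - 1) \<le> a * a powr (p - 1)" using a0 by (intro mult_left_mono) auto
    also have "a * a powr (p - 1) = a powr p" using a0 by (simp add: powr_mult_base)
    finally show ?thesis .
  qed
  have "(s + t) powr p = s * (s + t) powr (p - 1) + t * (s + t) powr (p - 1)"
    using st by (simp add: powr_mult_base distrib_right[symmetric])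
  also have "\<dots> \<le> s powr p + t powr p" using aux[of s] aux[of t] assms by simp
  finally show ?thesis .
qed

lemma young_powr:
  fixes x e p :: real
  assumes "0 \<le> x" "0 < e" "0 < p" "p < 2"
  shows "x powr p \<le> e * x^2 + e powr (- p / (2 - p))"
proof -
  define T where "T = e powr (- 1 / (2 - p))"
  have T0: "T > 0" unfolding T_def using assms by simp
  show ?thesis
  proof (cases "x \<le> T")
    case True
    have "x powr p \<le> T powr p" using True assms by (intro powr_mono2) auto
    also have "T powr p = e powr (- p / (2 - p))" unfolding T_def powr_powr by simp
    finally show ?thesis using assms by (smt (verit) mult_nonneg_nonneg zero_le_power2)
  next
    case False
    then have x0: "x > 0" using T0 by simp
    have "x powr p = x powr 2 * x powr (p - 2)" by (simp add: powr_add[symmetric])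
    also have "x powr (p - 2) \<le> T powr (p - 2)" using powr_mono2'[of "p - 2" T x] False T0 assms by simp
    then have "x powr 2 * x powr (p - 2) \<le> x powr 2 * T powr (p - 2)" by (intro mult_left_mono) auto
    also have "T powr (p - 2) = e"
    proof -
      have "T powr (p - 2) = e powr (- 1 / (2 - p) * (p - 2))" unfolding T_def powr_powr ..
      also have "- 1 / (2 - p) * (p - 2) = 1" using assms by (simp add: field_simps)
      finally show ?thesis using assms by simp
    qed
    finally have "x powr p \<le> e * x^2" using x0 by (simp add: mult.commute)
    moreover have "0 \<le> e powr (- p / (2 - p))" by simp
    ultimately show ?thesis by linarith
  qed
qed

lemma vnorm_sq: "(vnorm m a)^2 = (\<Sum>k<m. (a k)^2)"
  unfolding vnorm_def by (simp add: sum_nonneg)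

lemma vnorm_tri: "vnorm m v \<le> vnorm m (\<lambda>k. v k - w k) + vnorm m w"
proof -
  have "vnorm m v = L2_set (\<lambda>k. (v k - w k) + w k) {..<m}" unfolding vnorm_def L2_set_def by simp
  also have "\<dots> \<le> L2_set (\<lambda>k. v k - w k) {..<m} + L2_set w {..<m}" by (rule L2_set_triangle_ineq)
  finally show ?thesis unfolding vnorm_def L2_set_def .
qed

lemma pointwise_bound:
  assumes "0 < p" "p < 1" "0 < e"
  shows "vnorm m v powr p - vnorm m w powr p \<le> e * (\<Sum>k<m. (v k - w k)^2) + e powr (- p / (2 - p))"
proof -
  have v0: "0 \<le> vnorm m a" for a unfolding vnorm_def by (simp add: sum_nonneg)
  have "vnorm m v powr p \<le> (vnorm m (\<lambda>k. v k - w k) + vnorm m w) powr p"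
    using vnorm_tri[of m v w] assms v0[of v] by (intro powr_mono2) auto
  also have "\<dots> \<le> vnorm m (\<lambda>k. v k - w k) powr p + vnorm m w powr p"
    using assms v0 by (intro powr_subadd) auto
  finally have "vnorm m v powr p - vnorm m w powr p \<le> vnorm m (\<lambda>k. v k - w k) powr p" by simp
  also have "\<dots> \<le> e * (vnorm m (\<lambda>k. v k - w k))^2 + e powr (- p / (2 - p))"
    using assms v0 by (intro young_powr) auto
  finally show ?thesis unfolding vnorm_sq .
qed


lemma norm_sq_vec: "(norm (z::real^'n::finite))^2 = (\<Sum>j\<in>UNIV. (z$j)^2)"
  by (simp add: norm_vec_def L2_set_def sum_nonneg)

lemma sum_poincare:
  fixes u :: "real^'n::finite \<Rightarrow> nat \<Rightarrow> real" and G :: "real^'n \<Rightarrow> nat \<Rightarrow> real^'n"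
  assumes r: "r > 0" and W: "W012 (ball x0 r) m u G"
  shows "integrable (lebesgue_on (ball x0 r)) (\<lambda>x. \<Sum>k<m. (u x k)^2)"
    and "integral\<^sup>L (lebesgue_on (ball x0 r)) (\<lambda>x. \<Sum>k<m. (u x k)^2)
       \<le> 4 * r^2 * integral\<^sup>L (lebesgue_on (ball x0 r)) (\<lambda>x. gnorm2 m (G x))"
proof -
  define U where "U = ball x0 r"
  define j0 where "j0 = (undefined :: 'n)"
  obtain \<phi> :: "nat \<Rightarrow> real^'n \<Rightarrow> nat \<Rightarrow> real" where
    tf: "\<And>i k. k < m \<Longrightarrow> test_fun U (\<lambda>x. \<phi> i x k)" and
    c1: "(\<lambda>i. integral\<^sup>L (lebesgue_on U) (\<lambda>x. \<Sum>k<m. (\<phi> i x k - u x k)\<^sup>2)) \<longlonglongrightarrow> 0" and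
    c2: "(\<lambda>i. integral\<^sup>L (lebesgue_on U)
              (\<lambda>x. \<Sum>k<m. \<Sum>j\<in>UNIV. (partial j (\<lambda>y. \<phi> i y k) x - G x k $ j)\<^sup>2)) \<longlonglongrightarrow> 0"
    using W unfolding W012_def U_def by blast
  have W12: "\<And>k. k < m \<Longrightarrow> L2 U (\<lambda>x. u x k) \<and> (\<forall>j. L2 U (\<lambda>x. G x k $ j) \<and> weak_deriv U (\<lambda>x. u x k) j (\<lambda>x. G x k $ j))"
    using W unfolding W012_def W12_def U_def by blast
  have Lphi: "L2 U (\<lambda>x. \<phi> i x k)" if "k < m" for i k
  proof -
    have "continuous_on UNIV (\<lambda>x. \<phi> i x k)" using tf[OF that, of i] unfolding test_fun_def
      by (simp add: differentiable_imp_continuous_within continuous_at_imp_continuous_on)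
    then show ?thesis unfolding U_def by (rule cont_L2)
  qed
  have Ldphi: "L2 U (partial j (\<lambda>y. \<phi> i y k))" if "k < m" for i k j
    using tf[OF that, of i] unfolding test_fun_def U_def by (intro cont_L2) blast
  have intsq: "integrable (lebesgue_on U) (\<lambda>x. (f x)^2)" if "L2 U f" for f using that unfolding L2_def by blast
  have ucomp: "integral\<^sup>L (lebesgue_on U) (\<lambda>x. (u x k)^2) \<le> 4 * r^2 * integral\<^sup>L (lebesgue_on U) (\<lambda>x. (G x k $ j0)^2)"
    if k: "k < m" for k
  proof -
    have e1: "(\<lambda>i. integral\<^sup>L (lebesgue_on U) (\<lambda>x. ((\<lambda>y. \<phi> i y k) x - u x k)^2)) \<longlonglongrightarrow> 0"
    proof (rule Lim_null_comparison[OF _ c1], rule always_eventually, rule allI)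
      fix i
      have "integral\<^sup>L (lebesgue_on U) (\<lambda>x. (\<phi> i x k - u x k)^2) \<le> integral\<^sup>L (lebesgue_on U) (\<lambda>x. \<Sum>k<m. (\<phi> i x k - u x k)\<^sup>2)"
      proof (rule integral_mono)
        show "integrable (lebesgue_on U) (\<lambda>x. (\<phi> i x k - u x k)^2)"
          using intsq[OF L2_minus[OF Lphi[OF k] conjunct1[OF W12[OF k]]]] .
        show "integrable (lebesgue_on U) (\<lambda>x. \<Sum>k<m. (\<phi> i x k - u x k)\<^sup>2)"
          using intsq[OF L2_minus[OF Lphi conjunct1[OF W12]]] by (intro Bochner_Integration.integrable_sum) auto
        show "(\<phi> i x k - u x k)^2 \<le> (\<Sum>k<m. (\<phi> i x k - u x k)\<^sup>2)" for x
          using k by (intro member_le_sum) auto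
      qed
      then show "norm (integral\<^sup>L (lebesgue_on U) (\<lambda>x. ((\<lambda>y. \<phi> i y k) x - u x k)^2)) \<le> integral\<^sup>L (lebesgue_on U) (\<lambda>x. \<Sum>k<m. (\<phi> i x k - u x k)\<^sup>2)"
        by simp
    qed
    have e2: "(\<lambda>i. integral\<^sup>L (lebesgue_on U) (\<lambda>x. (partial j0 (\<lambda>y. \<phi> i y k) x - G x k $ j0)^2)) \<longlonglongrightarrow> 0"
    proof (rule Lim_null_comparison[OF _ c2], rule always_eventually, rule allI)
      fix i
      have "integral\<^sup>L (lebesgue_on U) (\<lambda>x. (partial j0 (\<lambda>y. \<phi> i y k) x - G x k $ j0)^2)
         \<le> integral\<^sup>L (lebesgue_on U) (\<lambda>x. \<Sum>k<m. \<Sum>j\<in>UNIV. (partial j (\<lambda>y. \<phi> i y k) x - G x k $ j)\<^sup>2)"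
      proof (rule integral_mono)
        show "integrable (lebesgue_on U) (\<lambda>x. (partial j0 (\<lambda>y. \<phi> i y k) x - G x k $ j0)^2)"
          using intsq[OF L2_minus[OF Ldphi[OF k] conjunct1[OF spec[OF conjunct2[OF W12[OF k]]]]]] .
        show "integrable (lebesgue_on U) (\<lambda>x. \<Sum>k<m. \<Sum>j\<in>UNIV. (partial j (\<lambda>y. \<phi> i y k) x - G x k $ j)\<^sup>2)"
          using intsq[OF L2_minus[OF Ldphi conjunct1[OF spec[OF conjunct2[OF W12]]]]]
          by (intro Bochner_Integration.integrable_sum) auto
        fix x
        have "(partial j0 (\<lambda>y. \<phi> i y k) x - G x k $ j0)^2 \<le> (\<Sum>j\<in>UNIV. (partial j (\<lambda>y. \<phi> i y k) x - G x k $ j)\<^sup>2)"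
          by (rule member_le_sum[where f="\<lambda>j. (partial j (\<lambda>y. \<phi> i y k) x - G x k $ j)\<^sup>2"]) auto
        also have "\<dots> \<le> (\<Sum>k<m. \<Sum>j\<in>UNIV. (partial j (\<lambda>y. \<phi> i y k) x - G x k $ j)\<^sup>2)"
          using k by (intro member_le_sum[where f="\<lambda>k. \<Sum>j\<in>UNIV. (partial j (\<lambda>y. \<phi> i y k) x - G x k $ j)\<^sup>2"]) (auto intro: sum_nonneg)
        finally show "(partial j0 (\<lambda>y. \<phi> i y k) x - G x k $ j0)^2 \<le> (\<Sum>k<m. \<Sum>j\<in>UNIV. (partial j (\<lambda>y. \<phi> i y k) x - G x k $ j)\<^sup>2)" .
      qed
      then show "norm (integral\<^sup>L (lebesgue_on U) (\<lambda>x. (partial j0 (\<lambda>y. \<phi> i y k) x - G x k $ j0)^2))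
         \<le> integral\<^sup>L (lebesgue_on U) (\<lambda>x. \<Sum>k<m. \<Sum>j\<in>UNIV. (partial j (\<lambda>y. \<phi> i y k) x - G x k $ j)\<^sup>2)"
        by simp
    qed
    show ?thesis unfolding U_def
    proof (rule poincare_comp[OF r, where \<phi>="\<lambda>i y. \<phi> i y k" and j=j0])
      show "L2 (ball x0 r) (\<lambda>x. u x k)" using W12[OF k] unfolding U_def by blast
      show "L2 (ball x0 r) (\<lambda>x. G x k $ j0)" using W12[OF k] unfolding U_def by blast
      show "weak_deriv (ball x0 r) (\<lambda>x. u x k) j0 (\<lambda>x. G x k $ j0)" using W12[OF k] unfolding U_def by blast
      show "\<And>i. test_fun (ball x0 r) (\<lambda>y. \<phi> i y k)" using tf[OF k] unfolding U_def by blast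
    qed (use e1 e2 U_def in auto)
  qed
  have iu: "integrable (lebesgue_on U) (\<lambda>x. (u x k)^2)" if "k < m" for k
    using intsq conjunct1[OF W12[OF that]] by blast
  have iG: "integrable (lebesgue_on U) (\<lambda>x. (G x k $ j)^2)" if "k < m" for k j
    using intsq conjunct1[OF spec[OF conjunct2[OF W12[OF that]]]] by blast
  show "integrable (lebesgue_on (ball x0 r)) (\<lambda>x. \<Sum>k<m. (u x k)^2)"
    using iu unfolding U_def by (intro Bochner_Integration.integrable_sum) auto
  have ign: "integrable (lebesgue_on U) (\<lambda>x. (norm (G x k))^2)" if "k < m" for k
    unfolding norm_sq_vec using iG[OF that] by (intro Bochner_Integration.integrable_sum) auto
  have "integral\<^sup>L (lebesgue_on U) (\<lambda>x. \<Sum>k<m. (u x k)^2) = (\<Sum>k<m. integral\<^sup>L (lebesgue_on U) (\<lambda>x. (u x k)^2))"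
    using iu by (intro Bochner_Integration.integral_sum) auto
  also have "\<dots> \<le> (\<Sum>k<m. 4 * r^2 * integral\<^sup>L (lebesgue_on U) (\<lambda>x. (norm (G x k))^2))"
  proof (rule sum_mono)
    fix k assume k: "k \<in> {..<m}"
    have "integral\<^sup>L (lebesgue_on U) (\<lambda>x. (G x k $ j0)^2) \<le> integral\<^sup>L (lebesgue_on U) (\<lambda>x. (norm (G x k))^2)"
    proof (rule integral_mono)
      show "integrable (lebesgue_on U) (\<lambda>x. (G x k $ j0)^2)" using iG k by auto
      show "integrable (lebesgue_on U) (\<lambda>x. (norm (G x k))^2)" using ign k by auto
      fix x
      have "\<bar>G x k $ j0\<bar> \<le> norm (G x k)" by (rule component_le_norm_cart)
      then show "(G x k $ j0)^2 \<le> (norm (G x k))^2"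
        by (metis abs_ge_zero power2_abs power_mono)
    qed
    then show "integral\<^sup>L (lebesgue_on U) (\<lambda>x. (u x k)^2) \<le> 4 * r^2 * integral\<^sup>L (lebesgue_on U) (\<lambda>x. (norm (G x k))^2)"
      using ucomp[of k] k by (smt (verit) lessThan_iff mult_left_mono zero_le_power2 mult_nonneg_nonneg)
  qed
  also have "\<dots> = 4 * r^2 * integral\<^sup>L (lebesgue_on U) (\<lambda>x. gnorm2 m (G x))"
    unfolding gnorm2_def sum_distrib_left[symmetric]
    using ign by (subst Bochner_Integration.integral_sum) auto
  finally show "integral\<^sup>L (lebesgue_on (ball x0 r)) (\<lambda>x. \<Sum>k<m. (u x k)^2)
       \<le> 4 * r^2 * integral\<^sup>L (lebesgue_on (ball x0 r)) (\<lambda>x. gnorm2 m (G x))" unfolding U_def .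
qed


theorem lemma2p1:
  fixes p :: real
  assumes "CARD('n::finite) \<ge> 2" and "0 < p" and "p < 1"
  shows "\<exists>C0>0. \<forall>m::nat. m \<ge> 1 \<longrightarrow>
    (\<forall>(x0::real^'n) r v w Gv Gw.
       r > 0 \<and> W12 (ball x0 r) m v Gv \<and> W12 (ball x0 r) m w Gw \<and>
       W012 (ball x0 r) m (\<lambda>x k. v x k - w x k) (\<lambda>x k. Gv x k - Gw x k) \<longrightarrow>
       integral\<^sup>L (lebesgue_on (ball x0 r)) (\<lambda>x. vnorm m (v x) powr p - vnorm m (w x) powr p)
         \<le> p / 4 * integral\<^sup>L (lebesgue_on (ball x0 r)) (\<lambda>x. gnorm2 m (\<lambda>k. Gv x k - Gw x k))
           + C0 * r powr (real CARD('n) + 2 * p / (2 - p)))"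
proof -
  define q where "q = p / (2 - p)"
  define C0 where "C0 = (p / 16) powr (- q) * unit_ball_vol (real CARD('n)) + 1"
  have C0pos: "C0 > 0" unfolding C0_def by (simp add: add_nonneg_pos)
  show ?thesis
  proof (intro exI[of _ C0] conjI allI impI C0pos)
    fix m :: nat and x0 :: "real^'n" and r :: real and v w :: "real^'n \<Rightarrow> nat \<Rightarrow> real" and Gv Gw :: "real^'n \<Rightarrow> nat \<Rightarrow> real^'n"
    assume "m \<ge> 1"
    assume H: "r > 0 \<and> W12 (ball x0 r) m v Gv \<and> W12 (ball x0 r) m w Gw \<and>
       W012 (ball x0 r) m (\<lambda>x k. v x k - w x k) (\<lambda>x k. Gv x k - Gw x k)"
    then have r: "r > 0" and W: "W012 (ball x0 r) m (\<lambda>x k. v x k - w x k) (\<lambda>x k. Gv x k - Gw x k)" by auto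
    define U where "U = ball x0 r"
    define e where "e = p / (16 * r^2)"
    define K where "K = e powr (- p / (2 - p))"
    have e0: "e > 0" unfolding e_def using r assms by simp
    interpret fm: finite_measure "lebesgue_on U" unfolding U_def by (rule finite_ball)
    note SP = sum_poincare[OF r W]
    have iS: "integrable (lebesgue_on U) (\<lambda>x. \<Sum>k<m. (v x k - w x k)^2)" using SP(1) unfolding U_def .
    have Sb: "integral\<^sup>L (lebesgue_on U) (\<lambda>x. \<Sum>k<m. (v x k - w x k)^2)
        \<le> 4 * r^2 * integral\<^sup>L (lebesgue_on U) (\<lambda>x. gnorm2 m (\<lambda>k. Gv x k - Gw x k))" using SP(2) unfolding U_def .
    have ig: "integrable (lebesgue_on U) (\<lambda>x. e * (\<Sum>k<m. (v x k - w x k)^2) + K)" using iS by auto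
    have g0: "0 \<le> e * (\<Sum>k<m. (v x k - w x k)^2) + K" for x
      unfolding K_def using e0 by (intro add_nonneg_nonneg mult_nonneg_nonneg sum_nonneg) auto
    have L1: "integral\<^sup>L (lebesgue_on U) (\<lambda>x. vnorm m (v x) powr p - vnorm m (w x) powr p)
        \<le> integral\<^sup>L (lebesgue_on U) (\<lambda>x. e * (\<Sum>k<m. (v x k - w x k)^2) + K)"
    proof (cases "integrable (lebesgue_on U) (\<lambda>x. vnorm m (v x) powr p - vnorm m (w x) powr p)")
      case True
      show ?thesis
      proof (rule integral_mono[OF True ig])
        fix x show "vnorm m (v x) powr p - vnorm m (w x) powr p \<le> e * (\<Sum>k<m. (v x k - w x k)^2) + K"
          unfolding K_def using pointwise_bound[OF assms(2,3) e0] by blast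
      qed
    next
      case False
      then have "integral\<^sup>L (lebesgue_on U) (\<lambda>x. vnorm m (v x) powr p - vnorm m (w x) powr p) = 0"
        by (rule not_integrable_integral_eq)
      moreover have "0 \<le> integral\<^sup>L (lebesgue_on U) (\<lambda>x. e * (\<Sum>k<m. (v x k - w x k)^2) + K)"
        using g0 by (intro Bochner_Integration.integral_nonneg) auto
      ultimately show ?thesis by simp
    qed
    have vol: "measure (lebesgue_on U) (space (lebesgue_on U)) = unit_ball_vol (real CARD('n)) * r ^ CARD('n)"
    proof -
      have "measure (lebesgue_on U) (space (lebesgue_on U)) = measure lebesgue U"
        by (simp add: measure_restrict_space U_def)
      also have "\<dots> = measure lborel (ball x0 r)" unfolding U_def by simp
      also have "\<dots> = unit_ball_vol (real CARD('n)) * r ^ CARD('n)" using r content_ball[of r x0] by simp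
      finally show ?thesis .
    qed
    have I2: "integral\<^sup>L (lebesgue_on U) (\<lambda>x. e * (\<Sum>k<m. (v x k - w x k)^2) + K)
        = e * integral\<^sup>L (lebesgue_on U) (\<lambda>x. \<Sum>k<m. (v x k - w x k)^2) + K * (unit_ball_vol (real CARD('n)) * r ^ CARD('n))"
      using iS vol by (simp add: mult.commute)
    have E1: "e * integral\<^sup>L (lebesgue_on U) (\<lambda>x. \<Sum>k<m. (v x k - w x k)^2)
        \<le> p / 4 * integral\<^sup>L (lebesgue_on U) (\<lambda>x. gnorm2 m (\<lambda>k. Gv x k - Gw x k))"
    proof -
      have "e * integral\<^sup>L (lebesgue_on U) (\<lambda>x. \<Sum>k<m. (v x k - w x k)^2)
         \<le> e * (4 * r^2 * integral\<^sup>L (lebesgue_on U) (\<lambda>x. gnorm2 m (\<lambda>k. Gv x k - Gw x k)))"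
        using Sb e0 by (intro mult_left_mono) auto
      also have "\<dots> = p / 4 * integral\<^sup>L (lebesgue_on U) (\<lambda>x. gnorm2 m (\<lambda>k. Gv x k - Gw x k))"
        unfolding e_def using r by (simp add: field_simps)
      finally show ?thesis .
    qed
    have Kf: "K = (p / 16) powr (- q) * r powr (2 * q)"
    proof -
      have ee: "e = (p / 16) / r powr 2" unfolding e_def using r by simp
      have eq: "- p / (2 - p) = - q" unfolding q_def by simp
      have "K = ((p / 16) / r powr 2) powr (- q)" unfolding K_def eq ee ..
      also have "\<dots> = (p / 16) powr (- q) / (r powr 2) powr (- q)" by (rule powr_divide)
      also have "(r powr 2) powr (- q) = r powr (- (2 * q))" by (simp add: powr_powr)
      also have "(p / 16) powr (- q) / r powr (- (2 * q)) = (p / 16) powr (- q) * r powr (2 * q)"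
        by (simp add: powr_minus_divide)
      finally show ?thesis .
    qed
    have E2: "K * (unit_ball_vol (real CARD('n)) * r ^ CARD('n))
        = (p / 16) powr (- q) * unit_ball_vol (real CARD('n)) * r powr (real CARD('n) + 2 * p / (2 - p))"
    proof -
      have "r ^ CARD('n) = r powr (real CARD('n))" using r by (simp add: powr_realpow)
      then have "r powr (2 * q) * r ^ CARD('n) = r powr (real CARD('n) + 2 * p / (2 - p))"
        unfolding q_def by (simp add: powr_add[symmetric] add.commute)
      then show ?thesis unfolding Kf by (metis mult.assoc mult.commute mult.left_commute)
    qed
    have E3: "(p / 16) powr (- q) * unit_ball_vol (real CARD('n)) * r powr (real CARD('n) + 2 * p / (2 - p))
        \<le> C0 * r powr (real CARD('n) + 2 * p / (2 - p))"
      unfolding C0_def by (intro mult_right_mono) auto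
    show "integral\<^sup>L (lebesgue_on (ball x0 r)) (\<lambda>x. vnorm m (v x) powr p - vnorm m (w x) powr p)
         \<le> p / 4 * integral\<^sup>L (lebesgue_on (ball x0 r)) (\<lambda>x. gnorm2 m (\<lambda>k. Gv x k - Gw x k))
           + C0 * r powr (real CARD('n) + 2 * p / (2 - p))"
      using L1 I2 E1 E2 E3 unfolding U_def by linarith
  qed
qed

end
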